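(* Let $i,n$ be natural numbers and let $A$ be a brace of cardinality $p^n$, where $p$ is a prime with $p>n+1$. Let $I$ be an ideal of $A$. Then $p^iI=\{p^ia: a\in I\}$ is an ideal of $A$.
   Context: A (left) brace is a set $A$ with binary operations $+,\circ$ such that $(A,+)$ is an abelian group, $(A,\circ)$ is a group, and $a\circ(b+c)+a=a\circ b+a\circ c$ for all $a,b,c$. Write $a*b=a\circ b-a-b$. An ideal of a brace $A$ is a subgroup $I$ of $(A,+)$ which is a normal subgroup of $(A,\circ)$ and satisfies $a*x\in I$ for all $a\in A$, $x\in I$; equivalently, an additive subgroup $I$ with $A*I\subseteq I$ and $I*A\subseteq I$. $p^ia$ denotes the $p^i$-fold additive multiple of $a$. *)

theory Defs
  imports "HOL-Algebra.Algebra" "HOL-Computational_Algebra.Primes"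
begin

text \<open>A (left) brace is given by two group structures on the same carrier:
  Ad is the additive (abelian) group (A,+), Ci is the multiplicative group (A,\<circ>).\<close>

definition brace :: "'a monoid \<Rightarrow> 'a monoid \<Rightarrow> bool" where
  "brace Ad Ci \<longleftrightarrow> comm_group Ad \<and> group Ci \<and> carrier Ci = carrier Ad \<and>
     (\<forall>a\<in>carrier Ad. \<forall>b\<in>carrier Ad. \<forall>c\<in>carrier Ad.
        (a \<otimes>\<^bsub>Ci\<^esub> (b \<otimes>\<^bsub>Ad\<^esub> c)) \<otimes>\<^bsub>Ad\<^esub> a
          = (a \<otimes>\<^bsub>Ci\<^esub> b) \<otimes>\<^bsub>Ad\<^esub> (a \<otimes>\<^bsub>Ci\<^esub> c))"

definition brace_star :: "'a monoid \<Rightarrow> 'a monoid \<Rightarrow> 'a \<Rightarrow> 'a \<Rightarrow> 'a" where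
  "brace_star Ad Ci a b =
     ((a \<otimes>\<^bsub>Ci\<^esub> b) \<otimes>\<^bsub>Ad\<^esub> inv\<^bsub>Ad\<^esub> a) \<otimes>\<^bsub>Ad\<^esub> inv\<^bsub>Ad\<^esub> b"

definition brace_ideal :: "'a monoid \<Rightarrow> 'a monoid \<Rightarrow> 'a set \<Rightarrow> bool" where
  "brace_ideal Ad Ci I \<longleftrightarrow> subgroup I Ad \<and> I \<lhd> Ci \<and>
     (\<forall>a\<in>carrier Ad. \<forall>x\<in>I. brace_star Ad Ci a x \<in> I)"

end

theory Submission
  imports Defs
begin

locale BR =
  fixes Ad Ci :: "'a monoid"
  assumes br: "brace Ad Ci"
begin

sublocale AG: comm_group Ad using br unfolding brace_def by auto
sublocale CG: group Ci using br unfolding brace_def by auto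

abbreviation A where "A \<equiv> carrier Ad"
abbreviation pl (infixl "+." 65) where "x +. y \<equiv> x \<otimes>\<^bsub>Ad\<^esub> y"
abbreviation neg where "neg x \<equiv> inv\<^bsub>Ad\<^esub> x"
abbreviation zr where "zr \<equiv> \<one>\<^bsub>Ad\<^esub>"
abbreviation cc (infixl "\<diamond>" 70) where "x \<diamond> y \<equiv> x \<otimes>\<^bsub>Ci\<^esub> y"
abbreviation cinv where "cinv x \<equiv> inv\<^bsub>Ci\<^esub> x"
abbreviation mul where "mul x (k::nat) \<equiv> x [^]\<^bsub>Ad\<^esub> k"

definition lam where "lam a b = (a \<diamond> b) +. neg a"

lemma carr: "carrier Ci = A" using br unfolding brace_def by auto

lemma distr: "a \<in> A \<Longrightarrow> b \<in> A \<Longrightarrow> c \<in> A \<Longrightarrow> (a \<diamond> (b +. c)) +. a = (a \<diamond> b) +. (a \<diamond> c)"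
  using br unfolding brace_def by auto

lemma cc_closed[simp]: "a \<in> A \<Longrightarrow> b \<in> A \<Longrightarrow> a \<diamond> b \<in> A"
  using CG.m_closed carr by auto

lemma cinv_closed[simp]: "a \<in> A \<Longrightarrow> cinv a \<in> A"
  using CG.inv_closed carr by auto

lemma one_eq: "\<one>\<^bsub>Ci\<^esub> = zr"
proof -
  have o: "\<one>\<^bsub>Ci\<^esub> \<in> A" using carr by auto
  have "(\<one>\<^bsub>Ci\<^esub> \<diamond> (zr +. zr)) +. \<one>\<^bsub>Ci\<^esub> = (\<one>\<^bsub>Ci\<^esub> \<diamond> zr) +. (\<one>\<^bsub>Ci\<^esub> \<diamond> zr)"
    using distr[OF o AG.one_closed AG.one_closed] by auto
  then have "zr +. \<one>\<^bsub>Ci\<^esub> = zr +. zr" using o carr by simp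
  then show ?thesis using o by simp
qed

lemma canc1[simp]: "x \<in> A \<Longrightarrow> y \<in> A \<Longrightarrow> x +. (neg x +. y) = y"
  by (simp add: AG.m_assoc[symmetric])
lemma canc2[simp]: "x \<in> A \<Longrightarrow> y \<in> A \<Longrightarrow> neg x +. (x +. y) = y"
  by (simp add: AG.m_assoc[symmetric])

lemma lam_closed[simp]: "a \<in> A \<Longrightarrow> b \<in> A \<Longrightarrow> lam a b \<in> A"
  unfolding lam_def by simp

lemma lam_add: "a \<in> A \<Longrightarrow> b \<in> A \<Longrightarrow> c \<in> A \<Longrightarrow> lam a (b +. c) = lam a b +. lam a c"
proof -
  assume h: "a \<in> A" "b \<in> A" "c \<in> A"
  have "a \<diamond> (b +. c) = (a \<diamond> b) +. (a \<diamond> c) +. neg a"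
    using distr[OF h] h by (metis AG.inv_solve_right AG.inv_closed AG.m_closed cc_closed)
  then show ?thesis unfolding lam_def using h by (simp add: AG.m_ac)
qed

lemma lam_zero[simp]: "a \<in> A \<Longrightarrow> lam a zr = zr"
proof -
  assume a: "a \<in> A"
  have "lam a zr = lam a zr +. lam a zr" using lam_add[OF a, of zr zr] by simp
  then show ?thesis using a by (metis AG.l_cancel_one' lam_closed AG.one_closed)
qed

lemma lam_neg: "a \<in> A \<Longrightarrow> b \<in> A \<Longrightarrow> lam a (neg b) = neg (lam a b)"
proof -
  assume h: "a \<in> A" "b \<in> A"
  have "lam a (neg b) +. lam a b = zr" using lam_add[OF h(1) AG.inv_closed[OF h(2)] h(2)] h by simp
  then show ?thesis using h by (metis AG.inv_equality AG.inv_closed lam_closed)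
qed

lemma lam_mul: "a \<in> A \<Longrightarrow> b \<in> A \<Longrightarrow> lam a (mul b k) = mul (lam a b) k"
  by (induction k) (auto simp: lam_add)

lemma cc_eq: "a \<in> A \<Longrightarrow> b \<in> A \<Longrightarrow> a \<diamond> b = a +. lam a b"
  unfolding lam_def by (simp add: AG.m_ac)

lemma lam_comp: "a \<in> A \<Longrightarrow> b \<in> A \<Longrightarrow> c \<in> A \<Longrightarrow> lam (a \<diamond> b) c = lam a (lam b c)"
proof -
  assume h: "a \<in> A" "b \<in> A" "c \<in> A"
  have "lam a (lam b c) = lam a (b \<diamond> c) +. neg (lam a b)"
    unfolding lam_def[of b c] using h by (simp add: lam_add lam_neg)
  also have "\<dots> = (a \<diamond> (b \<diamond> c)) +. neg (a \<diamond> b)"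
    unfolding lam_def using h by (simp add: AG.inv_mult AG.m_ac)
  finally show ?thesis unfolding lam_def using h carr by (simp add: CG.m_assoc)
qed

lemma lam_one[simp]: "c \<in> A \<Longrightarrow> lam \<one>\<^bsub>Ci\<^esub> c = c"
  unfolding lam_def using carr by (simp add: one_eq)

lemma lam_inv1[simp]: "a \<in> A \<Longrightarrow> c \<in> A \<Longrightarrow> lam (cinv a) (lam a c) = c"
  using lam_comp[of "cinv a" a c] carr by simp

lemma lam_inv2[simp]: "a \<in> A \<Longrightarrow> c \<in> A \<Longrightarrow> lam a (lam (cinv a) c) = c"
  using lam_comp[of a "cinv a" c] carr by simp

definition st where "st a b = lam a b +. neg b"

lemma st_eq: "brace_star Ad Ci a b = st a b"
  unfolding brace_star_def st_def lam_def by simp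

lemma st_closed[simp]: "a \<in> A \<Longrightarrow> b \<in> A \<Longrightarrow> st a b \<in> A"
  unfolding st_def by simp

lemma lam_st: "a \<in> A \<Longrightarrow> b \<in> A \<Longrightarrow> lam a b = st a b +. b"
  unfolding st_def by (simp add: AG.m_assoc)

lemma st_add: "a \<in> A \<Longrightarrow> b \<in> A \<Longrightarrow> c \<in> A \<Longrightarrow> st a (b +. c) = st a b +. st a c"
  unfolding st_def by (simp add: lam_add AG.inv_mult AG.m_ac)

lemma st_zero[simp]: "a \<in> A \<Longrightarrow> st a zr = zr"
  unfolding st_def by simp

lemma st_neg: "a \<in> A \<Longrightarrow> b \<in> A \<Longrightarrow> st a (neg b) = neg (st a b)"
  unfolding st_def by (simp add: lam_neg AG.inv_mult)

lemma st_mul: "a \<in> A \<Longrightarrow> b \<in> A \<Longrightarrow> st a (mul b k) = mul (st a b) k"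
  by (induction k) (auto simp: st_add)

lemma st_comp: "a \<in> A \<Longrightarrow> b \<in> A \<Longrightarrow> c \<in> A \<Longrightarrow> st a (lam b c) = st (a \<diamond> b) c +. neg (st b c)"
  unfolding st_def using lam_comp by (simp add: AG.inv_mult AG.m_ac)

fun Fs :: "nat \<Rightarrow> 'a set" where
  "Fs 0 = {zr}"
| "Fs (Suc k) = {m \<in> A. \<forall>a\<in>A. st a m \<in> Fs k}"

lemma Fs_sub: "subgroup (Fs k) Ad"
proof (induction k)
  case 0
  show ?case by (rule AG.subgroupI) auto
next
  case (Suc k)
  interpret S: subgroup "Fs k" Ad by (rule Suc)
  show ?case
  proof (rule AG.subgroupI)
    show "Fs (Suc k) \<subseteq> A" by auto
    show "Fs (Suc k) \<noteq> {}" using S.one_closed by auto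
    fix x assume x: "x \<in> Fs (Suc k)"
    then show "neg x \<in> Fs (Suc k)" by (auto simp: st_neg)
    fix y assume y: "y \<in> Fs (Suc k)"
    then show "x +. y \<in> Fs (Suc k)" using x by (auto simp: st_add)
  qed
qed

lemma Fs_carr: "x \<in> Fs k \<Longrightarrow> x \<in> A"
  using subgroup.mem_carrier[OF Fs_sub] by blast

lemma Fs_lam: "a \<in> A \<Longrightarrow> m \<in> Fs k \<Longrightarrow> lam a m \<in> Fs k"
proof (cases k)
  case 0
  then show "a \<in> A \<Longrightarrow> m \<in> Fs k \<Longrightarrow> lam a m \<in> Fs k" by simp
next
  case (Suc j)
  interpret S: subgroup "Fs j" Ad by (rule Fs_sub)
  assume a: "a \<in> A" and m: "m \<in> Fs k"
  have mA: "m \<in> A" using m Fs_carr by blast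
  have "\<forall>b\<in>A. st b (lam a m) \<in> Fs j"
  proof
    fix b assume b: "b \<in> A"
    have "st b (lam a m) = st (b \<diamond> a) m +. neg (st a m)" using st_comp a b mA by simp
    then show "st b (lam a m) \<in> Fs j" using m Suc a b by simp
  qed
  then show ?thesis using Suc a mA by simp
qed

lemma Fs_mono: "Fs k \<subseteq> Fs (Suc k)"
proof (induction k)
  case 0
  then show ?case by auto
next
  case (Suc k)
  then show ?case by auto
qed

lemma coset_img:
  assumes F: "subgroup F Ad" and inv: "\<forall>a\<in>A. \<forall>m\<in>F. lam a m \<in> F"
    and a: "a \<in> A" and m: "m \<in> A"
  shows "lam a ` (F #>\<^bsub>Ad\<^esub> m) = F #>\<^bsub>Ad\<^esub> (lam a m)"
proof -
  have FA: "\<And>h. h \<in> F \<Longrightarrow> h \<in> A" using subgroup.mem_carrier[OF F] by blast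
  show ?thesis
  proof
    show "lam a ` (F #>\<^bsub>Ad\<^esub> m) \<subseteq> F #>\<^bsub>Ad\<^esub> (lam a m)"
      unfolding r_coset_def using inv a m FA by (auto simp: lam_add)
    show "F #>\<^bsub>Ad\<^esub> (lam a m) \<subseteq> lam a ` (F #>\<^bsub>Ad\<^esub> m)"
    proof
      fix x assume "x \<in> F #>\<^bsub>Ad\<^esub> (lam a m)"
      then obtain h where h: "h \<in> F" "x = h +. lam a m" unfolding r_coset_def by auto
      have h': "lam (cinv a) h \<in> F" using inv h a by simp
      have "x = lam a (lam (cinv a) h +. m)" using h a m FA by (simp add: lam_add)
      moreover have "lam (cinv a) h +. m \<in> F #>\<^bsub>Ad\<^esub> m" unfolding r_coset_def using h' by auto
      ultimately show "x \<in> lam a ` (F #>\<^bsub>Ad\<^esub> m)" by blast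
    qed
  qed
qed


fun ev :: "'a \<Rightarrow> nat \<Rightarrow> 'a" where
  "ev y 0 = y"
| "ev y (Suc j) = st y (ev y j)"

lemma ev_closed[simp]: "y \<in> A \<Longrightarrow> ev y j \<in> A"
  by (induction j) auto

fun asum :: "(nat \<Rightarrow> 'a) \<Rightarrow> nat \<Rightarrow> 'a" where
  "asum f 0 = zr"
| "asum f (Suc m) = asum f m +. f m"

lemma asum_sub: "subgroup H Ad \<Longrightarrow> (\<And>j. j < m \<Longrightarrow> f j \<in> H) \<Longrightarrow> asum f m \<in> H"
  by (induction m) (auto simp: subgroup.one_closed subgroup.m_closed)

lemma asum_closed[simp]: "(\<And>j. j < m \<Longrightarrow> f j \<in> A) \<Longrightarrow> asum f m \<in> A"
  by (induction m) auto

lemma asum_cong: "(\<And>j. j < m \<Longrightarrow> f j = g j) \<Longrightarrow> asum f m = asum g m"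
  by (induction m) auto

lemma asum_add: "(\<And>j. j < m \<Longrightarrow> f j \<in> A) \<Longrightarrow> (\<And>j. j < m \<Longrightarrow> g j \<in> A) \<Longrightarrow>
   asum (\<lambda>j. f j +. g j) m = asum f m +. asum g m"
  by (induction m) (auto simp: AG.m_ac)

lemma asum_shift: "(\<And>j. j < Suc m \<Longrightarrow> f j \<in> A) \<Longrightarrow> asum f (Suc m) = f 0 +. asum (\<lambda>j. f (Suc j)) m"
  by (induction m) (auto simp: AG.m_ac)

lemma st_asum: "y \<in> A \<Longrightarrow> (\<And>j. j < m \<Longrightarrow> f j \<in> A) \<Longrightarrow> st y (asum f m) = asum (\<lambda>j. st y (f j)) m"
  by (induction m) (auto simp: st_add)

lemma asum_mul: "(\<And>j. j < m \<Longrightarrow> f j \<in> A) \<Longrightarrow> asum (\<lambda>j. mul (f j) k) m = mul (asum f m) k"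
  by (induction m) (auto simp: AG.nat_pow_distrib)

lemma cpow_binom: "y \<in> A \<Longrightarrow> y [^]\<^bsub>Ci\<^esub> m = asum (\<lambda>j. mul (ev y j) (m choose (Suc j))) m"
proof (induction m)
  case 0
  then show ?case by (simp add: one_eq)
next
  case (Suc m)
  have y: "y \<in> carrier Ci" using Suc carr by simp
  define w where "w = asum (\<lambda>j. mul (ev y j) (m choose (Suc j))) m"
  have wA: "w \<in> A" unfolding w_def using Suc by simp
  have "y [^]\<^bsub>Ci\<^esub> Suc m = y \<diamond> y [^]\<^bsub>Ci\<^esub> m" by (rule CG.nat_pow_Suc2[OF y])
  also have "\<dots> = y \<diamond> w" using Suc w_def by simp
  also have "\<dots> = y +. (st y w +. w)" using cc_eq lam_st Suc wA by simp
  finally have L: "y [^]\<^bsub>Ci\<^esub> Suc m = y +. (st y w +. w)" .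
  have sw: "st y w = asum (\<lambda>j. mul (ev y (Suc j)) (m choose (Suc j))) m"
    unfolding w_def using Suc by (simp add: st_asum st_mul)
  have "asum (\<lambda>j. mul (ev y j) (Suc m choose (Suc j))) (Suc m)
      = asum (\<lambda>j. mul (ev y j) (m choose j) +. mul (ev y j) (m choose Suc j)) (Suc m)"
    using Suc by (intro asum_cong) (simp add: AG.nat_pow_mult)
  also have "\<dots> = asum (\<lambda>j. mul (ev y j) (m choose j)) (Suc m) +. asum (\<lambda>j. mul (ev y j) (m choose Suc j)) (Suc m)"
    using Suc by (intro asum_add) auto
  also have "asum (\<lambda>j. mul (ev y j) (m choose j)) (Suc m) = y +. st y w"
    using Suc by (subst asum_shift) (auto simp: sw)
  also have "asum (\<lambda>j. mul (ev y j) (m choose Suc j)) (Suc m) = w"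
    using Suc by (simp add: w_def binomial_eq_0)
  finally show ?case using L Suc wA by (simp add: AG.m_assoc)
qed

end

locale BRp = BR +
  fixes p n :: nat
  assumes pr: "Factorial_Ring.prime p" and fin: "finite (carrier Ad)" and cardA: "card (carrier Ad) = p ^ n"
begin

lemma fixpt:
  assumes F: "subgroup F Ad" and inv: "\<forall>a\<in>A. \<forall>m\<in>F. lam a m \<in> F" and ne: "F \<noteq> A"
  shows "\<exists>m\<in>A. m \<notin> F \<and> (\<forall>a\<in>A. st a m \<in> F)"
proof -
  define E where "E = rcosets\<^bsub>Ad\<^esub> F"
  define \<phi> where "\<phi> = (\<lambda>a. restrict (\<lambda>Q. lam a ` Q) E)"
  have FA: "F \<subseteq> A" using subgroup.subset[OF F] .
  have Ecos: "Q \<in> E \<Longrightarrow> \<exists>m\<in>A. Q = F #>\<^bsub>Ad\<^esub> m" for Q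
    unfolding E_def RCOSETS_def by auto
  have cosE: "m \<in> A \<Longrightarrow> F #>\<^bsub>Ad\<^esub> m \<in> E" for m
    unfolding E_def using AG.rcosetsI FA by blast
  have EA: "Q \<in> E \<Longrightarrow> Q \<subseteq> A" for Q
    using Ecos FA AG.r_coset_subset_G by blast
  have img: "a \<in> A \<Longrightarrow> Q \<in> E \<Longrightarrow> lam a ` Q \<in> E" for a Q
    using Ecos coset_img[OF F inv] cosE by (metis lam_closed)
  have bij: "a \<in> A \<Longrightarrow> \<phi> a \<in> Bij E" for a
  proof -
    assume a: "a \<in> A"
    have "bij_betw (\<phi> a) E E"
    proof (rule bij_betw_byWitness[where f'="\<phi> (cinv a)"])
      show "\<forall>Q\<in>E. \<phi> (cinv a) (\<phi> a Q) = Q"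
      proof
        fix Q assume Q: "Q \<in> E"
        have "\<phi> (cinv a) (\<phi> a Q) = lam (cinv a) ` lam a ` Q"
          unfolding \<phi>_def using Q img a by simp
        also have "\<dots> = Q" using EA[OF Q] a by (auto simp: image_image subset_iff image_iff)
        finally show "\<phi> (cinv a) (\<phi> a Q) = Q" .
      qed
      show "\<forall>Q\<in>E. \<phi> a (\<phi> (cinv a) Q) = Q"
      proof
        fix Q assume Q: "Q \<in> E"
        have "\<phi> a (\<phi> (cinv a) Q) = lam a ` lam (cinv a) ` Q"
          unfolding \<phi>_def using Q img a by simp
        also have "\<dots> = Q" using EA[OF Q] a by (auto simp: image_image subset_iff image_iff)
        finally show "\<phi> a (\<phi> (cinv a) Q) = Q" .
      qed
      show "\<phi> a ` E \<subseteq> E" unfolding \<phi>_def using img a by auto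
      show "\<phi> (cinv a) ` E \<subseteq> E" unfolding \<phi>_def using img a by auto
    qed
    then show ?thesis unfolding Bij_def \<phi>_def by auto
  qed
  have act: "group_action Ci E \<phi>"
    unfolding group_action_def group_hom_def group_hom_axioms_def
  proof (intro conjI)
    show "group Ci" by (rule CG.is_group)
    show "group (BijGroup E)" by (rule group_BijGroup)
    show "\<phi> \<in> hom Ci (BijGroup E)"
    proof (rule homI)
      show "a \<in> carrier Ci \<Longrightarrow> \<phi> a \<in> carrier (BijGroup E)" for a
        using bij carr by (simp add: BijGroup_def)
      fix a b assume ab: "a \<in> carrier Ci" "b \<in> carrier Ci"
      then have ab': "a \<in> A" "b \<in> A" using carr by auto
      have "\<phi> (a \<diamond> b) = compose E (\<phi> a) (\<phi> b)"
      proof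
        fix Q show "\<phi> (a \<diamond> b) Q = compose E (\<phi> a) (\<phi> b) Q"
        proof (cases "Q \<in> E")
          case True
          then show ?thesis unfolding \<phi>_def compose_def using img ab' EA[OF True]
            by (auto simp: image_image lam_comp subset_iff intro!: image_cong)
        next
          case False
          then show ?thesis unfolding \<phi>_def compose_def by simp
        qed
      qed
      then show "\<phi> (a \<diamond> b) = \<phi> a \<otimes>\<^bsub>BijGroup E\<^esub> \<phi> b"
        using bij ab' by (simp add: BijGroup_def)
    qed
  qed
  interpret GA: group_action Ci E \<phi> by (rule act)
  have finE: "finite E" unfolding E_def RCOSETS_def using fin by auto
  have "card E * card F = p ^ n"
    using AG.lagrange[OF F] cardA unfolding E_def order_def by simp
  moreover obtain i where i: "i \<le> n" "card F = p ^ i"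
    using divides_primepow_nat[OF pr] calculation by (metis dvd_triv_right)
  moreover have "i \<noteq> n"
  proof
    assume "i = n"
    then have "card F = card A" using i cardA by simp
    then show False using ne FA fin by (meson card_subset_eq)
  qed
  ultimately have "card E * p ^ i = p ^ (n - i) * p ^ i" "n - i > 0"
    by (simp_all add: power_add[symmetric])
  then have "card E = p ^ (n - i)" using pr
    by (metis mult_right_cancel power_not_zero not_prime_0)
  then have pE: "p dvd card E" using \<open>n - i > 0\<close> by (simp add: dvd_power)
  define Ob where "Ob = orbits Ci E \<phi>"
  have ObE: "Ob \<subseteq> Pow E" unfolding Ob_def using GA.orbits_coverture by blast
  have finOb: "finite Ob" using ObE finE by (meson finite_Pow_iff finite_subset)
  have sumO: "(\<Sum>orb\<in>Ob. card orb) = card E"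
    using GA.disjoint_sum[OF finE, of "\<lambda>_. 1::nat"] unfolding Ob_def by simp
  have odvd: "orb \<in> Ob \<Longrightarrow> card orb = 1 \<or> p dvd card orb" for orb
  proof -
    assume "orb \<in> Ob"
    then obtain Q where Q: "Q \<in> E" "orb = orbit Ci \<phi> Q" unfolding Ob_def orbits_def by auto
    have "card orb * card (stabilizer Ci \<phi> Q) = p ^ n"
      using GA.orbit_stabilizer_theorem[OF Q(1)] Q(2) carr cardA unfolding order_def by simp
    then have "card orb dvd p ^ n" by (rule dvdI[OF sym, where k="card (stabilizer Ci \<phi> Q)"])
    then obtain j where "card orb = p ^ j" using divides_primepow_nat[OF pr] by blast
    then show ?thesis by (cases j) auto
  qed
  define S1 where "S1 = {orb\<in>Ob. card orb = 1}"
  have "card E = (\<Sum>orb\<in>S1. card orb) + (\<Sum>orb\<in>Ob - S1. card orb)"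
  proof -
    have "S1 \<subseteq> Ob" unfolding S1_def by auto
    then show ?thesis using sumO sum.subset_diff[OF _ finOb, of S1 card] by simp
  qed
  moreover have "(\<Sum>orb\<in>S1. card orb) = card S1" unfolding S1_def by simp
  moreover have "p dvd (\<Sum>orb\<in>Ob - S1. card orb)"
  proof (rule dvd_sum)
    fix orb assume "orb \<in> Ob - S1"
    then have "orb \<in> Ob" "card orb \<noteq> 1" by (auto simp: S1_def)
    then show "p dvd card orb" using odvd by blast
  qed
  ultimately have pS1: "p dvd card S1" using pE by (metis dvd_add_left_iff)
  have FE: "F \<in> E" using cosE[OF AG.one_closed] AG.coset_join2[OF AG.one_closed F subgroup.one_closed[OF F]]
    by simp
  have lamF: "g \<in> A \<Longrightarrow> lam g ` F = F" for g
    using coset_img[OF F inv, of g zr] AG.coset_join2[OF AG.one_closed F subgroup.one_closed[OF F]] by simp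
  have phF: "\<forall>g\<in>carrier Ci. \<phi> g F = F" using FE lamF carr by (simp add: \<phi>_def)
  have "orbit Ci \<phi> F = {F}"
  proof
    show "orbit Ci \<phi> F \<subseteq> {F}" unfolding orbit_def using phF by blast
    have "\<phi> \<one>\<^bsub>Ci\<^esub> F \<in> orbit Ci \<phi> F" unfolding orbit_def using CG.one_closed by blast
    then show "{F} \<subseteq> orbit Ci \<phi> F" using phF CG.one_closed by simp
  qed
  then have "{F} \<in> Ob" unfolding Ob_def orbits_def using FE by blast
  then have FS1: "{F} \<in> S1" unfolding S1_def by simp
  have finS1: "finite S1" using finOb unfolding S1_def by simp
  have "card S1 > 0" using FS1 finS1 card_gt_0_iff by blast
  then have "p \<le> card S1" using pS1 by (simp add: dvd_imp_le)
  then have c2: "card S1 \<ge> 2" using prime_ge_2_nat[OF pr] by simp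
  have "\<not> S1 \<subseteq> {{F}}"
  proof
    assume "S1 \<subseteq> {{F}}"
    then have "card S1 \<le> 1" using card_mono[of "{{F}}" S1] by simp
    then show False using c2 by simp
  qed
  then obtain orb where orb: "orb \<in> S1" "orb \<noteq> {F}" by blast
  then obtain Q where Q: "Q \<in> E" "orb = orbit Ci \<phi> Q" unfolding S1_def Ob_def orbits_def by auto
  have "card orb = 1" using orb S1_def by auto
  moreover have "Q \<in> orb" using GA.orbit_refl[OF Q(1)] Q by simp
  ultimately have orbQ: "orb = {Q}" by (metis card_1_singletonE singletonD)
  obtain m where m: "m \<in> A" "Q = F #>\<^bsub>Ad\<^esub> m" using Ecos Q(1) by blast
  have mF: "m \<notin> F"
  proof
    assume "m \<in> F"
    then have "Q = F" using m AG.coset_join2[OF m(1) F] by simp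
    then show False using orb orbQ by simp
  qed
  have "\<forall>a\<in>A. st a m \<in> F"
  proof
    fix a assume a: "a \<in> A"
    have "\<phi> a Q \<in> orbit Ci \<phi> Q" unfolding orbit_def using a carr by auto
    then have "\<phi> a Q = Q" using orbQ Q by simp
    then have "F #>\<^bsub>Ad\<^esub> (lam a m) = F #>\<^bsub>Ad\<^esub> m"
      using coset_img[OF F inv a m(1)] m Q(1) unfolding \<phi>_def by simp
    then have "lam a m \<in> F #>\<^bsub>Ad\<^esub> m" using AG.rcos_self[OF lam_closed[OF a m(1)] F] by simp
    then obtain h where h: "h \<in> F" "lam a m = h +. m" unfolding r_coset_def by auto
    have "st a m = h" unfolding st_def using h FA m(1) by (auto simp: AG.m_assoc)
    then show "st a m \<in> F" using h by simp
  qed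
  then show ?thesis using m mF by blast
qed


lemma card_sub_pow: "subgroup H Ad \<Longrightarrow> \<exists>a. card H = p ^ a"
proof -
  assume H: "subgroup H Ad"
  have "card (rcosets\<^bsub>Ad\<^esub> H) * card H = p ^ n" using AG.lagrange[OF H] cardA unfolding order_def by simp
  then have "card H dvd p ^ n" by (metis dvd_triv_right)
  then show ?thesis using divides_primepow_nat[OF pr] by blast
qed

lemma Fs_card: "Fs k = A \<or> p ^ k \<le> card (Fs k)"
proof (induction k)
  case 0
  then show ?case by simp
next
  case (Suc k)
  show ?case
  proof (cases "Fs (Suc k) = A")
    case True then show ?thesis by simp
  next
    case False
    have sub: "Fs (Suc k) \<subseteq> A" using Fs_carr by blast
    have nk: "Fs k \<noteq> A" using False Fs_mono[of k] sub by blast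
    then have IH: "p ^ k \<le> card (Fs k)" using Suc by simp
    obtain m where m: "m \<in> A" "m \<notin> Fs k" "\<forall>a\<in>A. st a m \<in> Fs k"
      using fixpt[OF Fs_sub _ nk] Fs_lam by blast
    have "m \<in> Fs (Suc k)" using m by simp
    then have ps: "Fs k \<subset> Fs (Suc k)" using m(2) Fs_mono[of k] by blast
    have finS: "finite (Fs (Suc k))" using sub fin finite_subset by blast
    have lt: "card (Fs k) < card (Fs (Suc k))" using psubset_card_mono[OF finS ps] .
    obtain a where a: "card (Fs k) = p ^ a" using card_sub_pow[OF Fs_sub] by blast
    obtain b where b: "card (Fs (Suc k)) = p ^ b" using card_sub_pow[OF Fs_sub] by blast
    have p1: "p > 1" using pr prime_gt_1_nat by blast
    have "a < b" using lt a b p1 by (simp add: power_strict_increasing_iff)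
    then have "p ^ Suc a \<le> p ^ b" using p1 by (intro power_increasing) auto
    then have "p * p ^ k \<le> card (Fs (Suc k))" using IH a b
      by (metis mult_le_mono2 order.trans power_Suc)
    then show ?thesis by simp
  qed
qed

lemma Fs_n: "Fs n = A"
proof (rule ccontr)
  assume ne: "Fs n \<noteq> A"
  then have "p ^ n \<le> card (Fs n)" using Fs_card by blast
  moreover have sub: "Fs n \<subseteq> A" using Fs_carr by blast
  ultimately have "card (Fs n) = card A" using cardA card_mono[OF fin sub] by simp
  then show False using ne sub fin card_subset_eq by blast
qed


end

locale BRJ = BRp +
  fixes J
  assumes big: "n + 1 < p" and idl: "brace_ideal Ad Ci J"
begin

lemma Jsub: "subgroup J Ad" using idl unfolding brace_ideal_def by auto
lemma Jnorm: "J \<lhd> Ci" using idl unfolding brace_ideal_def by auto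
lemma Jst: "a \<in> A \<Longrightarrow> x \<in> J \<Longrightarrow> st a x \<in> J" using idl st_eq unfolding brace_ideal_def by auto
lemma JA: "x \<in> J \<Longrightarrow> x \<in> A" using subgroup.mem_carrier[OF Jsub] by blast
lemma Jlam: "a \<in> A \<Longrightarrow> x \<in> J \<Longrightarrow> lam a x \<in> J"
  using lam_st JA Jst subgroup.m_closed[OF Jsub] by simp

lemma sub_mul: "subgroup H Ad \<Longrightarrow> x \<in> H \<Longrightarrow> mul x k \<in> H"
  by (induction k) (auto simp: subgroup.one_closed subgroup.m_closed)

lemma ev_J: "y \<in> J \<Longrightarrow> ev y j \<in> J"
  by (induction j) (auto simp: JA Jst)

lemma ev_Fs: "y \<in> Fs k \<Longrightarrow> ev y j \<in> Fs (k - j)"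
proof (induction j)
  case 0
  then show ?case by simp
next
  case (Suc j)
  have yA: "y \<in> A" using Suc Fs_carr by blast
  show ?case
  proof (cases "k - j")
    case 0
    then have "ev y j = zr" using Suc by simp
    then show ?thesis using 0 yA by simp
  next
    case (Suc i)
    then have "k - Suc j = i" by simp
    then show ?thesis using Suc \<open>y \<in> Fs k \<Longrightarrow> ev y j \<in> Fs (k - j)\<close> \<open>y \<in> Fs k\<close> yA by simp
  qed
qed

lemma Fs_mono_le: "a \<le> b \<Longrightarrow> Fs a \<subseteq> Fs b"
  using Fs_mono lift_Suc_mono_le[of Fs] by blast

lemma ppow:
  assumes yJ: "y \<in> J" and yF: "y \<in> Fs k" and kn: "k \<le> n"
  shows "\<exists>w. w \<in> J \<and> w \<in> Fs (k - 1) \<and> y [^]\<^bsub>Ci\<^esub> p = mul y p +. mul w p"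
proof -
  have yA: "y \<in> A" using JA yJ by blast
  have p1: "p > 1" using pr prime_gt_1_nat by blast
  obtain q where q: "p = Suc q" using p1 by (cases p) auto
  define h where "h j = mul (ev y (Suc j)) ((p choose Suc (Suc j)) div p)" for j
  define w where "w = asum h q"
  have hJ: "h j \<in> J" for j unfolding h_def using sub_mul[OF Jsub] ev_J[OF yJ] by blast
  have hF: "h j \<in> Fs (k - 1)" for j
  proof -
    have le: "k - Suc j \<le> k - 1" by simp
    have "ev y (Suc j) \<in> Fs (k - 1)" using ev_Fs[OF yF, of "Suc j"] Fs_mono_le[OF le] by blast
    then show ?thesis unfolding h_def using sub_mul[OF Fs_sub] by blast
  qed
  have hA: "h j \<in> A" for j using hJ JA by blast
  have "y [^]\<^bsub>Ci\<^esub> p = asum (\<lambda>j. mul (ev y j) (p choose (Suc j))) p"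
    by (rule cpow_binom[OF yA])
  also have "\<dots> = asum (\<lambda>j. mul (ev y j) (p choose (Suc j))) (Suc q)"
    by (simp only: q)
  also have "\<dots> = mul y p +. asum (\<lambda>j. mul (ev y (Suc j)) (p choose (Suc (Suc j)))) q"
    using yA by (subst asum_shift) auto
  also have "asum (\<lambda>j. mul (ev y (Suc j)) (p choose (Suc (Suc j)))) q = asum (\<lambda>j. mul (h j) p) q"
  proof (rule asum_cong)
    fix j assume j: "j < q"
    show "mul (ev y (Suc j)) (p choose (Suc (Suc j))) = mul (h j) p"
    proof (cases "Suc (Suc j) < p")
      case True
      then have "p dvd (p choose Suc (Suc j))" using dvd_choose_prime pr by auto
      then have "(p choose Suc (Suc j)) = ((p choose Suc (Suc j)) div p) * p" by simp
      then show ?thesis unfolding h_def using yA by (metis AG.nat_pow_pow ev_closed)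
    next
      case False
      then have "Suc j = p - 1" using j q by simp
      then have "k - Suc j = 0" using kn big by simp
      then have "ev y (Suc j) = zr" using ev_Fs[OF yF, of "Suc j"] by simp
      then show ?thesis unfolding h_def by simp
    qed
  qed
  also have "\<dots> = mul w p" unfolding w_def using hA by (simp add: asum_mul)
  finally have "y [^]\<^bsub>Ci\<^esub> p = mul y p +. mul w p" .
  moreover have "w \<in> J" unfolding w_def using asum_sub[OF Jsub] hJ by blast
  moreover have "w \<in> Fs (k - 1)" unfolding w_def using asum_sub[OF Fs_sub] hF by blast
  ultimately show ?thesis by blast
qed


definition P where "P = (\<lambda>a. mul a p) ` J"

lemma P_A: "x \<in> P \<Longrightarrow> x \<in> A" unfolding P_def using JA by auto

lemma P_cc: "x \<in> P \<Longrightarrow> z \<in> P \<Longrightarrow> x \<diamond> z \<in> P"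
proof -
  assume x: "x \<in> P" and z: "z \<in> P"
  obtain a b where ab: "a \<in> J" "b \<in> J" "x = mul a p" "z = mul b p" using x z unfolding P_def by auto
  have aA: "a \<in> A" and bA: "b \<in> A" using ab JA by auto
  have xA: "x \<in> A" using ab aA by simp
  have "x \<diamond> z = mul a p +. mul (lam x b) p" using cc_eq xA bA ab by (simp add: lam_mul)
  also have "\<dots> = mul (a +. lam x b) p" using aA bA xA by (simp add: AG.nat_pow_distrib)
  finally show ?thesis unfolding P_def using ab Jlam[OF xA ab(2)] subgroup.m_closed[OF Jsub] by blast
qed

lemma cpow_P: "y \<in> J \<Longrightarrow> y [^]\<^bsub>Ci\<^esub> p \<in> P"
proof -
  assume yJ: "y \<in> J"
  have "y \<in> Fs n" using Fs_n JA yJ by blast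
  then obtain w where w: "w \<in> J" "y [^]\<^bsub>Ci\<^esub> p = mul y p +. mul w p" using ppow[OF yJ] by blast
  then have "y [^]\<^bsub>Ci\<^esub> p = mul (y +. w) p" using JA yJ by (simp add: AG.nat_pow_distrib)
  then show ?thesis unfolding P_def using w yJ subgroup.m_closed[OF Jsub] by blast
qed

lemma conj_mult: "c \<in> A \<Longrightarrow> a \<in> A \<Longrightarrow> b \<in> A \<Longrightarrow>
   c \<diamond> (a \<diamond> b) \<diamond> cinv c = (c \<diamond> a \<diamond> cinv c) \<diamond> (c \<diamond> b \<diamond> cinv c)"
proof -
  assume h: "c \<in> A" "a \<in> A" "b \<in> A"
  then have h': "c \<in> carrier Ci" "a \<in> carrier Ci" "b \<in> carrier Ci" using carr by auto
  have "cinv c \<diamond> (c \<diamond> (b \<diamond> cinv c)) = b \<diamond> cinv c" using h' by (simp add: CG.m_assoc[symmetric])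
  then show ?thesis using h' by (simp add: CG.m_assoc)
qed

lemma conj_pow: "c \<in> A \<Longrightarrow> y \<in> A \<Longrightarrow> c \<diamond> y [^]\<^bsub>Ci\<^esub> (m::nat) \<diamond> cinv c = (c \<diamond> y \<diamond> cinv c) [^]\<^bsub>Ci\<^esub> m"
proof (induction m)
  case 0
  then show ?case using carr by simp
next
  case (Suc m)
  have yp: "y [^]\<^bsub>Ci\<^esub> m \<in> A" using Suc carr CG.nat_pow_closed by auto
  have "c \<diamond> y [^]\<^bsub>Ci\<^esub> Suc m \<diamond> cinv c = c \<diamond> (y [^]\<^bsub>Ci\<^esub> m \<diamond> y) \<diamond> cinv c" by simp
  also have "\<dots> = (c \<diamond> y [^]\<^bsub>Ci\<^esub> m \<diamond> cinv c) \<diamond> (c \<diamond> y \<diamond> cinv c)"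
    using conj_mult Suc yp by simp
  finally show ?case using Suc by simp
qed

lemma conj_J: "c \<in> A \<Longrightarrow> y \<in> J \<Longrightarrow> c \<diamond> y \<diamond> cinv c \<in> J"
  using normal.inv_op_closed2[OF Jnorm] carr by simp

lemma claim: "k \<le> n \<Longrightarrow> y \<in> J \<Longrightarrow> y \<in> Fs k \<Longrightarrow> c \<in> A \<Longrightarrow> c \<diamond> mul y p \<diamond> cinv c \<in> P"
proof (induction k arbitrary: y c)
  case 0
  then have "y = zr" by simp
  moreover have "zr \<in> P" unfolding P_def using subgroup.one_closed[OF Jsub] by force
  moreover have "c \<diamond> zr \<diamond> cinv c = zr"
  proof -
    have c': "c \<in> carrier Ci" using 0 carr by simp
    have "c \<diamond> \<one>\<^bsub>Ci\<^esub> \<diamond> cinv c = \<one>\<^bsub>Ci\<^esub>" using c' by simp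
    then show ?thesis using one_eq by simp
  qed
  ultimately show ?case by simp
next
  case (Suc k)
  have yA: "y \<in> A" using Suc JA by blast
  obtain w where w: "w \<in> J" "w \<in> Fs k" "y [^]\<^bsub>Ci\<^esub> p = mul y p +. mul w p"
    using ppow[OF Suc(3) Suc(4) Suc(2)] by auto
  have wA: "w \<in> A" using w JA by blast
  define u where "u = y [^]\<^bsub>Ci\<^esub> p"
  have uA: "u \<in> A" unfolding u_def using yA carr CG.nat_pow_closed by auto
  define w' where "w' = neg (lam (cinv u) w)"
  have w'J: "w' \<in> J" unfolding w'_def using Jlam[OF cinv_closed[OF uA] w(1)] subgroup.m_inv_closed[OF Jsub] by blast
  have w'F: "w' \<in> Fs k" unfolding w'_def using Fs_lam[OF cinv_closed[OF uA] w(2)] subgroup.m_inv_closed[OF Fs_sub] by blast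
  have w'A: "w' \<in> A" using w'J JA by blast
  have "u \<diamond> mul w' p = u +. mul (lam u w') p" using cc_eq uA w'A by (simp add: lam_mul)
  also have "lam u w' = neg w" unfolding w'_def using uA wA by (simp add: lam_neg)
  also have "u +. mul (neg w) p = mul y p" using w(3) yA wA unfolding u_def
    by (simp add: AG.nat_pow_inv AG.m_assoc)
  finally have dec: "mul y p = u \<diamond> mul w' p" by simp
  have "c \<diamond> mul y p \<diamond> cinv c = (c \<diamond> u \<diamond> cinv c) \<diamond> (c \<diamond> mul w' p \<diamond> cinv c)"
    using dec conj_mult Suc(5) uA w'A by simp
  moreover have "c \<diamond> u \<diamond> cinv c \<in> P"
    unfolding u_def using conj_pow Suc(5) yA cpow_P conj_J Suc(3) by simp
  moreover have "c \<diamond> mul w' p \<diamond> cinv c \<in> P" using Suc w'J w'F by simp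
  ultimately show ?case using P_cc by simp
qed

lemma main: "brace_ideal Ad Ci P"
  unfolding brace_ideal_def
proof (intro conjI)
  have PA: "P \<subseteq> A" using P_A by blast
  have zP: "zr \<in> P" unfolding P_def using subgroup.one_closed[OF Jsub] by force
  show "subgroup P Ad"
  proof (rule AG.subgroupI)
    show "P \<subseteq> A" by (rule PA)
    show "P \<noteq> {}" using zP by blast
    fix x assume "x \<in> P"
    then obtain a where a: "a \<in> J" "x = mul a p" unfolding P_def by auto
    then show "neg x \<in> P" unfolding P_def using JA subgroup.m_inv_closed[OF Jsub]
      by (auto simp: AG.nat_pow_inv[symmetric])
    fix z assume "z \<in> P"
    then obtain b where b: "b \<in> J" "z = mul b p" unfolding P_def by auto
    show "x +. z \<in> P" unfolding P_def using a b JA subgroup.m_closed[OF Jsub]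
      by (auto simp: AG.nat_pow_distrib[symmetric])
  qed
  have "subgroup P Ci"
  proof (rule CG.subgroupI)
    show "P \<subseteq> carrier Ci" using PA carr by simp
    show "P \<noteq> {}" using zP by blast
    fix x assume xP: "x \<in> P"
    then obtain a where a: "a \<in> J" "x = mul a p" unfolding P_def by auto
    have aA: "a \<in> A" using a JA by blast
    have xA: "x \<in> A" using xP PA by blast
    have "x \<diamond> cinv x = zr" using xA carr one_eq by simp
    then have "x +. lam x (cinv x) = zr" using cc_eq xA by simp
    then have "lam x (cinv x) = neg x" using xA by (metis AG.inv_equality AG.m_comm lam_closed cinv_closed)
    then have "cinv x = lam (cinv x) (neg x)" using xA by (metis lam_inv1 cinv_closed)
    also have "\<dots> = mul (lam (cinv x) (neg a)) p" using a aA xA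
      by (simp add: AG.nat_pow_inv[symmetric] lam_mul)
    finally show "cinv x \<in> P" unfolding P_def
      using Jlam[OF cinv_closed[OF xA]] subgroup.m_inv_closed[OF Jsub] a by blast
    fix z assume "z \<in> P"
    then show "x \<diamond> z \<in> P" using P_cc xP by blast
  qed
  moreover have "\<forall>c\<in>carrier Ci. \<forall>h\<in>P. c \<diamond> h \<diamond> cinv c \<in> P"
  proof (intro ballI)
    fix c h assume c: "c \<in> carrier Ci" and h: "h \<in> P"
    then obtain y where y: "y \<in> J" "h = mul y p" unfolding P_def by auto
    have "y \<in> Fs n" using Fs_n JA y by blast
    then show "c \<diamond> h \<diamond> cinv c \<in> P" using claim[of n y c] y c carr by simp
  qed
  ultimately show "P \<lhd> Ci" using CG.normal_inv_iff by blast
  show "\<forall>a\<in>A. \<forall>x\<in>P. brace_star Ad Ci a x \<in> P"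
  proof (intro ballI)
    fix a x assume a: "a \<in> A" and "x \<in> P"
    then obtain y where y: "y \<in> J" "x = mul y p" unfolding P_def by auto
    have "brace_star Ad Ci a x = mul (st a y) p" using y a JA by (simp add: st_eq st_mul)
    then show "brace_star Ad Ci a x \<in> P" unfolding P_def using Jst a y by blast
  qed
qed

end

theorem corollary14:
  fixes Ad Ci :: "'a monoid" and p n i :: nat and I :: "'a set"
  assumes "brace Ad Ci"
    and "Factorial_Ring.prime p" and "p > n + 1"
    and "finite (carrier Ad)" and "card (carrier Ad) = p ^ n"
    and "brace_ideal Ad Ci I"
  shows "brace_ideal Ad Ci ((\<lambda>a. a [^]\<^bsub>Ad\<^esub> (p ^ i)) ` I)"
proof (induction i)
  case 0
  interpret BR Ad Ci by (unfold_locales) (rule assms(1))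
  have "subgroup I Ad" using assms(6) unfolding brace_ideal_def by auto
  then have "(\<lambda>a. a [^]\<^bsub>Ad\<^esub> (p ^ 0)) ` I = I"
    using subgroup.mem_carrier by (force simp: image_iff)
  then show ?case using assms(6) by simp
next
  case (Suc i)
  interpret BR Ad Ci by (unfold_locales) (rule assms(1))
  define Q where "Q = (\<lambda>a. a [^]\<^bsub>Ad\<^esub> (p ^ i)) ` I"
  have B: "BRJ Ad Ci p n Q"
    using assms Suc unfolding Q_def
    by unfold_locales auto
  have IA: "I \<subseteq> carrier Ad" using assms(6) unfolding brace_ideal_def by (auto dest: subgroup.subset)
  have "(\<lambda>a. a [^]\<^bsub>Ad\<^esub> (p ^ Suc i)) ` I = (\<lambda>b. b [^]\<^bsub>Ad\<^esub> p) ` Q"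
    unfolding Q_def image_image using IA
    by (intro image_cong) (auto simp: AG.nat_pow_pow mult.commute)
  also have "\<dots> = BRJ.P Ad p Q" using BRJ.P_def[OF B] by simp
  finally show ?case using BRJ.main[OF B] by simp
qed

end
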